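(* Let $G$ be a graph with $n$ vertices, $m\geq 1$ edges and $t(G)$ triangles. Then \[ \lambda_n(G)\geq \frac{2m^2-3n\,t(G)}{m(n^2-2m)}\,n, \] with equality if and only if $G$ is a regular complete multipartite graph, i.e. a complete $k$-partite graph for some $k\geq 2$ with all $k$ parts of equal size.
   Context: All graphs are finite, simple and undirected. $t(G)$ is the number of triangles in $G$. For a graph $G$ of order $n$, $L(G)=D(G)-A(G)$ is its Laplacian ($A(G)$ the adjacency matrix, $D(G)$ the diagonal degree matrix), with eigenvalues $0=\lambda_1(G)\leq\dots\leq\lambda_n(G)$; $\lambda_n(G)$ is the largest Laplacian eigenvalue. *)

theory Defs
  imports "HOL-Analysis.Analysis"
begin

text \<open>A finite simple graph on the vertex type 'n (finite): symmetric, irreflexive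
  adjacency relation E. The number of vertices is CARD('n).\<close>

definition simple_graph :: "('n::finite \<Rightarrow> 'n \<Rightarrow> bool) \<Rightarrow> bool" where
  "simple_graph E \<longleftrightarrow> (\<forall>u v. E u v \<longleftrightarrow> E v u) \<and> (\<forall>u. \<not> E u u)"

definition edges :: "('n::finite \<Rightarrow> 'n \<Rightarrow> bool) \<Rightarrow> 'n set set" where
  "edges E = {{u, v} | u v. E u v}"

definition num_edges :: "('n::finite \<Rightarrow> 'n \<Rightarrow> bool) \<Rightarrow> nat" where
  "num_edges E = card (edges E)"

definition triangles :: "('n::finite \<Rightarrow> 'n \<Rightarrow> bool) \<Rightarrow> 'n set set" where
  "triangles E = {{a, b, c} | a b c. E a b \<and> E b c \<and> E a c}"

definition num_triangles :: "('n::finite \<Rightarrow> 'n \<Rightarrow> bool) \<Rightarrow> nat" where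
  "num_triangles E = card (triangles E)"

definition degree :: "('n::finite \<Rightarrow> 'n \<Rightarrow> bool) \<Rightarrow> 'n \<Rightarrow> nat" where
  "degree E v = card {u. E v u}"

definition laplacian :: "('n::finite \<Rightarrow> 'n \<Rightarrow> bool) \<Rightarrow> real^'n^'n" where
  "laplacian E = (\<chi> i j. (if i = j then real (degree E i) else 0) - (if E i j then 1 else 0))"

definition eigenvalue :: "real^'n^'n \<Rightarrow> real \<Rightarrow> bool" where
  "eigenvalue A \<mu> \<longleftrightarrow> (\<exists>x. x \<noteq> 0 \<and> A *v x = \<mu> *\<^sub>R x)"

text \<open>Largest Laplacian eigenvalue lambda_n(G) (the Laplacian is symmetric,
  so all its eigenvalues are real).\<close>
definition lap_max_eig :: "('n::finite \<Rightarrow> 'n \<Rightarrow> bool) \<Rightarrow> real" where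
  "lap_max_eig E = Max {\<mu>. eigenvalue (laplacian E) \<mu>}"

definition regular_complete_multipartite :: "('n::finite \<Rightarrow> 'n \<Rightarrow> bool) \<Rightarrow> bool" where
  "regular_complete_multipartite E \<longleftrightarrow>
     (\<exists>(k::nat) (f::'n \<Rightarrow> nat). k \<ge> 2 \<and> range f = {0..<k} \<and>
        (\<forall>i<k. \<forall>j<k. card {v. f v = i} = card {v. f v = j}) \<and>
        (\<forall>u v. E u v \<longleftrightarrow> f u \<noteq> f v))"

end

theory Submission
  imports Defs
begin



lemma sym_form:
  fixes M :: "real^'n^'n"
  assumes sym: "\<And>i j. M$i$j = M$j$i"
  shows "x \<bullet> (M *v y) = y \<bullet> (M *v x)"
proof -
  have "x \<bullet> (M *v y) = (\<Sum>i\<in>UNIV. \<Sum>j\<in>UNIV. x$i * M$i$j * y$j)"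
    by (simp add: inner_vec_def matrix_vector_mult_def sum_distrib_left mult.assoc)
  also have "\<dots> = (\<Sum>j\<in>UNIV. \<Sum>i\<in>UNIV. x$i * M$i$j * y$j)"
    by (rule sum.swap)
  also have "\<dots> = y \<bullet> (M *v x)"
    by (simp add: inner_vec_def matrix_vector_mult_def sum_distrib_left sym mult.commute mult.left_commute)
  finally show ?thesis .
qed

lemma psd_zero:
  fixes M :: "real^'n^'n"
  assumes sym: "\<And>i j. M$i$j = M$j$i"
    and le: "\<And>x. x \<bullet> (M *v x) \<le> \<mu> * (x \<bullet> x)"
    and eq: "v \<bullet> (M *v v) = \<mu> * (v \<bullet> v)"
  shows "M *v v = \<mu> *\<^sub>R v"
proof -
  define w where "w = \<mu> *\<^sub>R v - M *v v"
  define a where "a = w \<bullet> w"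
  define c where "c = \<mu> * (w \<bullet> w) - w \<bullet> (M *v w)"
  have c0: "c \<ge> 0" using le[of w] by (simp add: c_def)
  have a0: "a \<ge> 0" by (simp add: a_def)
  have key: "2 * t * a + t^2 * c \<ge> 0" for t
  proof -
    have h: "(v + t *\<^sub>R w) \<bullet> (M *v (v + t *\<^sub>R w)) \<le> \<mu> * ((v + t *\<^sub>R w) \<bullet> (v + t *\<^sub>R w))"
      by (rule le)
    have s: "v \<bullet> (M *v w) = w \<bullet> (M *v v)" by (rule sym_form[OF sym])
    have e1: "(v + t *\<^sub>R w) \<bullet> (M *v (v + t *\<^sub>R w)) = v \<bullet> (M *v v) + 2 * t * (w \<bullet> (M *v v)) + t^2 * (w \<bullet> (M *v w))"
      using s by (simp add: matrix_vector_right_distrib matrix_vector_mult_scaleR inner_add_left inner_add_right power2_eq_square algebra_simps)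
    have e2: "(v + t *\<^sub>R w) \<bullet> (v + t *\<^sub>R w) = v \<bullet> v + 2 * t * (v \<bullet> w) + t^2 * (w \<bullet> w)"
      by (simp add: inner_add_left inner_add_right power2_eq_square algebra_simps inner_commute)
    have e3: "a = \<mu> * (v \<bullet> w) - w \<bullet> (M *v v)"
      by (simp add: a_def w_def inner_diff_left inner_diff_right inner_commute algebra_simps)
    have "2 * t * a + t^2 * c = \<mu> * (v \<bullet> v + 2 * t * (v \<bullet> w) + t^2 * (w \<bullet> w)) - (v \<bullet> (M *v v) + 2 * t * (w \<bullet> (M *v v)) + t^2 * (w \<bullet> (M *v w)))"
      unfolding e3 c_def eq by (simp add: algebra_simps)
    then show ?thesis using h unfolding e1 e2 by linarith
  qed
  have "a = 0"
  proof (rule ccontr)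
    assume "a \<noteq> 0" then have ap: "a > 0" using a0 by simp
    define t where "t = - a / (c + 1)"
    have "2 * t * a + t^2 * c \<ge> 0" by (rule key)
    then have "(2 * t * a + t^2 * c) * (c+1)^2 \<ge> 0" by simp
    moreover have "(2 * t * a + t^2 * c) * (c+1)^2 = -(a^2 * (c + 2))"
    proof -
      have tc: "t * (c+1) = -a" using c0 unfolding t_def by simp
      have "(2 * t * a + t^2 * c) * (c+1)^2 = 2*a*(t*(c+1))*(c+1) + (t*(c+1))^2*c"
        by (simp add: algebra_simps power2_eq_square)
      also have "\<dots> = -(a^2 * (c + 2))" unfolding tc by (simp add: algebra_simps power2_eq_square)
      finally show ?thesis .
    qed
    ultimately have "a^2 * (c+2) \<le> 0" by simp
    moreover have "a^2 * (c+2) > 0" using ap c0 by simp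
    ultimately show False by simp
  qed
  then have "w = 0" by (simp add: a_def)
  then show ?thesis by (simp add: w_def)
qed

lemma sym_max_eig:
  fixes M :: "real^'n^'n"
  assumes sym: "\<And>i j. M$i$j = M$j$i"
  shows "\<exists>\<mu>. eigenvalue M \<mu> \<and> (\<forall>x. x \<bullet> (M *v x) \<le> \<mu> * (x \<bullet> x))"
proof -
  let ?S = "sphere (0::real^'n) 1"
  have ne: "?S \<noteq> {}"
    using vector_choose_size[of 1] by auto
  have cont: "continuous_on ?S (\<lambda>x. x \<bullet> (M *v x))"
    by (intro continuous_intros matrix_vector_mult_linear_continuous_on[THEN continuous_on_compose2[of UNIV]]) auto
  obtain v where v: "v \<in> ?S" and vmax: "\<And>y. y \<in> ?S \<Longrightarrow> y \<bullet> (M *v y) \<le> v \<bullet> (M *v v)"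
    using continuous_attains_sup[OF compact_sphere ne cont] by blast
  define \<mu> where "\<mu> = v \<bullet> (M *v v)"
  have vv: "v \<bullet> v = 1" using v by (simp add: dot_square_norm)
  have le: "x \<bullet> (M *v x) \<le> \<mu> * (x \<bullet> x)" for x
  proof (cases "x = 0")
    case True then show ?thesis by simp
  next
    case False
    define y where "y = (1 / norm x) *\<^sub>R x"
    have "y \<in> ?S" using False by (simp add: y_def)
    then have "y \<bullet> (M *v y) \<le> \<mu>" using vmax \<mu>_def by simp
    moreover have "y \<bullet> (M *v y) = (x \<bullet> (M *v x)) / (x \<bullet> x)"
      using False by (simp add: y_def matrix_vector_mult_scaleR dot_square_norm power2_eq_square)
    moreover have "x \<bullet> x > 0" using False by simp
    ultimately show ?thesis by (simp add: field_simps)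
  qed
  have "M *v v = \<mu> *\<^sub>R v"
    by (rule psd_zero[OF sym le]) (simp add: \<mu>_def vv)
  moreover have "v \<noteq> 0" using vv by auto
  ultimately have "eigenvalue M \<mu>" unfolding eigenvalue_def by blast
  with le show ?thesis by blast
qed

lemma sym_eig_finite:
  fixes M :: "real^'n^'n"
  assumes sym: "\<And>i j. M$i$j = M$j$i"
  shows "finite {\<mu>. eigenvalue M \<mu>}"
proof -
  let ?S = "{\<mu>. eigenvalue M \<mu>}"
  define ev where "ev \<mu> = (SOME x. x \<noteq> 0 \<and> M *v x = \<mu> *\<^sub>R x)" for \<mu>
  have ev: "ev \<mu> \<noteq> 0 \<and> M *v ev \<mu> = \<mu> *\<^sub>R ev \<mu>" if "\<mu> \<in> ?S" for \<mu>
  proof -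
    have "\<exists>x. x \<noteq> 0 \<and> M *v x = \<mu> *\<^sub>R x" using that unfolding eigenvalue_def by simp
    then show ?thesis unfolding ev_def by (rule someI_ex)
  qed
  have orth: "ev \<mu> \<bullet> ev \<nu> = 0" if "\<mu> \<in> ?S" "\<nu> \<in> ?S" "\<mu> \<noteq> \<nu>" for \<mu> \<nu>
  proof -
    have "ev \<mu> \<bullet> (M *v ev \<nu>) = ev \<nu> \<bullet> (M *v ev \<mu>)" by (rule sym_form[OF sym])
    then have "\<nu> * (ev \<mu> \<bullet> ev \<nu>) = \<mu> * (ev \<mu> \<bullet> ev \<nu>)"
      using ev[OF that(1)] ev[OF that(2)] by (simp add: inner_commute)
    then show ?thesis using that(3) by simp
  qed
  have inj: "inj_on ev ?S"
  proof (rule inj_onI)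
    fix \<mu> \<nu> assume a: "\<mu> \<in> ?S" "\<nu> \<in> ?S" "ev \<mu> = ev \<nu>"
    show "\<mu> = \<nu>"
    proof (rule ccontr)
      assume "\<mu> \<noteq> \<nu>"
      then have "ev \<mu> \<bullet> ev \<mu> = 0" using orth[OF a(1,2)] a(3) by simp
      then show False using ev[OF a(1)] by simp
    qed
  qed
  have "pairwise orthogonal (ev ` ?S)"
    unfolding pairwise_def orthogonal_def using orth by auto
  moreover have "0 \<notin> ev ` ?S" using ev by auto
  ultimately have "independent (ev ` ?S)" by (rule pairwise_orthogonal_independent)
  then have "finite (ev ` ?S)" using independent_bound by blast
  then show ?thesis using finite_imageD[OF _ inj] by blast
qed

lemma sym_max_eig_Max:
  fixes M :: "real^'n^'n"
  assumes sym: "\<And>i j. M$i$j = M$j$i"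
  shows "eigenvalue M (Max {\<mu>. eigenvalue M \<mu>}) \<and>
     (\<forall>x. x \<bullet> (M *v x) \<le> Max {\<mu>. eigenvalue M \<mu>} * (x \<bullet> x))"
proof -
  obtain \<mu> where m: "eigenvalue M \<mu>" and le: "\<forall>x. x \<bullet> (M *v x) \<le> \<mu> * (x \<bullet> x)"
    using sym_max_eig[OF sym] by blast
  have ub: "\<nu> \<le> \<mu>" if evn: "eigenvalue M \<nu>" for \<nu>
  proof -
    obtain x where x: "x \<noteq> 0" "M *v x = \<nu> *\<^sub>R x" using evn unfolding eigenvalue_def by blast
    have h1: "x \<bullet> (M *v x) \<le> \<mu> * (x \<bullet> x)" using le by blast
    have h2: "x \<bullet> (M *v x) = \<nu> * (x \<bullet> x)" using x(2) by simp
    have "\<nu> * (x \<bullet> x) \<le> \<mu> * (x \<bullet> x)" using h1 h2 by linarith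
    moreover have "x \<bullet> x > 0" using x by simp
    ultimately show ?thesis by (metis mult_le_cancel_right_pos)
  qed
  have "Max {\<mu>. eigenvalue M \<mu>} = \<mu>"
  proof (rule Max_eqI[OF sym_eig_finite[OF sym]])
    show "\<mu> \<in> {\<mu>. eigenvalue M \<mu>}" using m by simp
  next
    fix y assume "y \<in> {\<mu>. eigenvalue M \<mu>}"
    then show "y \<le> \<mu>" using ub by simp
  qed
  then show ?thesis using m le by (simp only:) blast
qed




definition ee :: "('n::finite \<Rightarrow> 'n \<Rightarrow> bool) \<Rightarrow> 'n \<Rightarrow> 'n \<Rightarrow> real" where
  "ee E u v = (if E u v then 1 else 0)"

definition dg :: "('n::finite \<Rightarrow> 'n \<Rightarrow> bool) \<Rightarrow> 'n \<Rightarrow> real" where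
  "dg E v = real (degree E v)"

definition xw :: "('n::finite \<Rightarrow> 'n \<Rightarrow> bool) \<Rightarrow> 'n \<Rightarrow> real^'n" where
  "xw E w = (\<chi> v. ee E w v - dg E w / real CARD('n))"

lemma card_indicator_sum:
  fixes P :: "'a::finite \<Rightarrow> bool"
  shows "real (card {x. P x}) = (\<Sum>x\<in>UNIV. if P x then 1 else 0)"
  by (simp add: sum.If_cases)

lemma ind3: "(if P \<and> Q \<and> R then 1 else (0::real)) = (if P then 1 else 0) * (if Q then 1 else 0) * (if R then 1 else 0)"
  by simp

lemma dg_sum: "dg E v = (\<Sum>u\<in>UNIV. ee E v u)"
  unfolding dg_def degree_def ee_def by (rule card_indicator_sum)

lemma ee_sq: "ee E u v * ee E u v = ee E u v" by (simp add: ee_def)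
lemma ee_ge0: "ee E u v \<ge> 0" by (simp add: ee_def)
lemma ee_le1: "ee E u v \<le> 1" by (simp add: ee_def)

lemma card_fibers:
  assumes fin: "finite A" and fib: "\<And>b. b \<in> g ` A \<Longrightarrow> card {a\<in>A. g a = b} = k"
  shows "card A = k * card (g ` A)"
proof -
  have "A = (\<Union>b\<in>g`A. {a\<in>A. g a = b})" by auto
  then have "card A = card (\<Union>b\<in>g`A. {a\<in>A. g a = b})" by simp
  also have "\<dots> = (\<Sum>b\<in>g`A. card {a\<in>A. g a = b})"
    by (rule card_UN_disjoint) (use fin in auto)
  also have "\<dots> = (\<Sum>b\<in>g`A. k)" using fib by simp
  finally show ?thesis by simp
qed

context
  fixes E :: "'n::finite \<Rightarrow> 'n \<Rightarrow> bool"
  assumes sg: "simple_graph E"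
begin

lemma symE: "E u v = E v u" using sg unfolding simple_graph_def by blast
lemma irrE: "\<not> E u u" using sg unfolding simple_graph_def by blast
lemma ee_sym: "ee E u v = ee E v u" by (simp add: ee_def symE[of u v])
lemma ee_irr: "ee E u u = 0" by (simp add: ee_def irrE)

lemma lap_sym: "laplacian E $ i $ j = laplacian E $ j $ i"
  by (simp add: laplacian_def symE[of i j])

lemma lap_mv: "(laplacian E *v x) $ i = dg E i * x$i - (\<Sum>j\<in>UNIV. ee E i j * x$j)"
proof -
  have "(laplacian E *v x) $ i = (\<Sum>j\<in>UNIV. (if i = j then real (degree E i) else 0) * x$j - ee E i j * x$j)"
    by (simp add: matrix_vector_mult_def laplacian_def dg_def ee_def left_diff_distrib)
  also have "\<dots> = dg E i * x$i - (\<Sum>j\<in>UNIV. ee E i j * x$j)"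
    by (simp add: sum_subtractf if_distrib[of "\<lambda>a. a * _"] dg_def cong: if_cong)
  finally show ?thesis .
qed

lemma quad_form: "x \<bullet> (laplacian E *v x) = (\<Sum>i\<in>UNIV. dg E i * x$i * x$i) - (\<Sum>i\<in>UNIV. \<Sum>j\<in>UNIV. ee E i j * x$i * x$j)"
  by (simp add: inner_vec_def lap_mv right_diff_distrib sum_subtractf sum_distrib_left mult_ac)

lemma Lxw: "(laplacian E *v xw E w) $ i = dg E i * ee E w i - (\<Sum>j\<in>UNIV. ee E i j * ee E w j)"
proof -
  have "(laplacian E *v xw E w) $ i = dg E i * (ee E w i - dg E w / real CARD('n))
     - (\<Sum>j\<in>UNIV. ee E i j * ee E w j - ee E i j * (dg E w / real CARD('n)))"
    by (simp add: lap_mv xw_def right_diff_distrib)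
  also have "\<dots> = dg E i * ee E w i - (\<Sum>j\<in>UNIV. ee E i j * ee E w j)
      - (dg E w / real CARD('n)) * (dg E i - (\<Sum>j\<in>UNIV. ee E i j))"
  proof -
    have "(\<Sum>j\<in>UNIV. ee E i j * (dg E w / real CARD('n))) = (\<Sum>j\<in>UNIV. ee E i j) * (dg E w / real CARD('n))"
      by (rule sum_distrib_right[symmetric])
    then show ?thesis unfolding sum_subtractf by (simp add: algebra_simps)
  qed
  also have "\<dots> = dg E i * ee E w i - (\<Sum>j\<in>UNIV. ee E i j * ee E w j)"
    by (simp add: dg_sum[of E i])
  finally show ?thesis .
qed

lemma dg_sum': "dg E v = (\<Sum>u\<in>UNIV. ee E u v)"
  by (simp add: dg_sum ee_sym)

lemma sum_Lxw: "(\<Sum>i\<in>UNIV. (laplacian E *v xw E w) $ i) = 0"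
proof -
  have "(\<Sum>i\<in>UNIV. \<Sum>j\<in>UNIV. ee E i j * ee E w j) = (\<Sum>j\<in>UNIV. \<Sum>i\<in>UNIV. ee E i j * ee E w j)"
    by (rule sum.swap)
  also have "\<dots> = (\<Sum>j\<in>UNIV. dg E j * ee E w j)"
    by (simp add: dg_sum' sum_distrib_right)
  finally show ?thesis by (simp add: Lxw sum_subtractf)
qed

lemma quad_xw: "xw E w \<bullet> (laplacian E *v xw E w) =
   (\<Sum>i\<in>UNIV. ee E w i * dg E i) - (\<Sum>i\<in>UNIV. \<Sum>j\<in>UNIV. ee E w i * ee E i j * ee E w j)"
proof -
  have "xw E w \<bullet> (laplacian E *v xw E w) = (\<Sum>i\<in>UNIV. ee E w i * (laplacian E *v xw E w) $ i)
        - (dg E w / real CARD('n)) * (\<Sum>i\<in>UNIV. (laplacian E *v xw E w) $ i)"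
    by (simp add: inner_vec_def xw_def left_diff_distrib sum_subtractf sum_distrib_left)
  also have "\<dots> = (\<Sum>i\<in>UNIV. ee E w i * (laplacian E *v xw E w) $ i)"
    by (simp add: sum_Lxw)
  also have "\<dots> = (\<Sum>i\<in>UNIV. ee E w i * dg E i - (\<Sum>j\<in>UNIV. ee E w i * ee E i j * ee E w j))"
  proof (rule sum.cong[OF refl])
    fix i
    have "ee E w i * (dg E i * ee E w i) = ee E w i * dg E i"
      using ee_sq[of E w i] by (metis mult.commute mult.left_commute)
    then show "ee E w i * (laplacian E *v xw E w) $ i = ee E w i * dg E i - (\<Sum>j\<in>UNIV. ee E w i * ee E i j * ee E w j)"
      by (simp add: Lxw right_diff_distrib sum_distrib_left mult.assoc)
  qed
  also have "\<dots> = (\<Sum>i\<in>UNIV. ee E w i * dg E i) - (\<Sum>i\<in>UNIV. \<Sum>j\<in>UNIV. ee E w i * ee E i j * ee E w j)"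
    by (simp add: sum_subtractf)
  finally show ?thesis .
qed

lemma norm_xw: "xw E w \<bullet> xw E w = dg E w - (dg E w)^2 / real CARD('n)"
proof -
  define c where "c = dg E w / real CARD('n)"
  have n0: "real CARD('n) > 0" by simp
  have "xw E w \<bullet> xw E w = (\<Sum>i\<in>UNIV. ee E w i * ee E w i - 2 * c * ee E w i + c * c)"
    by (simp add: inner_vec_def xw_def c_def algebra_simps)
  also have "\<dots> = dg E w - 2 * c * dg E w + real CARD('n) * c * c"
    by (simp add: sum.distrib sum_subtractf ee_sq dg_sum[of E w] sum_distrib_left)
  also have "\<dots> = dg E w - (dg E w)^2 / real CARD('n)"
    using n0 by (simp add: c_def field_simps power2_eq_square)
  finally show ?thesis .
qed

lemma Qsum: "(\<Sum>w\<in>UNIV. xw E w \<bullet> (laplacian E *v xw E w)) =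
   (\<Sum>i\<in>UNIV. (dg E i)^2) - (\<Sum>w\<in>UNIV. \<Sum>i\<in>UNIV. \<Sum>j\<in>UNIV. ee E w i * ee E i j * ee E w j)"
proof -
  have "(\<Sum>w\<in>UNIV. \<Sum>i\<in>UNIV. ee E w i * dg E i) = (\<Sum>i\<in>UNIV. \<Sum>w\<in>UNIV. ee E w i * dg E i)"
    by (rule sum.swap)
  also have "\<dots> = (\<Sum>i\<in>UNIV. (dg E i)^2)"
    by (simp add: sum_distrib_right[symmetric] dg_sum'[symmetric] power2_eq_square)
  finally show ?thesis by (simp add: quad_xw sum_subtractf)
qed

lemma Nsum: "(\<Sum>w\<in>UNIV. xw E w \<bullet> xw E w) =
   (\<Sum>i\<in>UNIV. dg E i) - (\<Sum>i\<in>UNIV. (dg E i)^2) / real CARD('n)"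
  by (simp add: norm_xw sum_subtractf sum_divide_distrib)

lemma edge_count: "card {(u,v). E u v} = 2 * num_edges E"
proof -
  let ?A = "{(u,v). E u v}"
  let ?g = "\<lambda>(u::'n,v). {u,v}"
  have img: "?g ` ?A = edges E" by (auto simp: edges_def)
  have fib: "card {a\<in>?A. ?g a = b} = 2" if "b \<in> ?g ` ?A" for b
  proof -
    obtain u v where uv: "E u v" "b = {u,v}" using \<open>b \<in> ?g ` ?A\<close> by auto
    have ne: "u \<noteq> v" using uv irrE by auto
    have "{a\<in>?A. ?g a = b} = {(u,v),(v,u)}"
      using uv symE by (auto simp: doubleton_eq_iff)
    then show ?thesis using ne by simp
  qed
  have "card ?A = 2 * card (?g ` ?A)" by (rule card_fibers) (use fib in auto)
  then show ?thesis by (simp add: img num_edges_def)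
qed

lemma S1_edges: "(\<Sum>i\<in>UNIV. dg E i) = 2 * real (num_edges E)"
proof -
  have "{(u,v). E u v} = (SIGMA u:UNIV. {v. E u v})" by auto
  then have "card {(u,v). E u v} = (\<Sum>u\<in>UNIV. card {v. E u v})"
    by (simp add: card_SigmaI)
  then have "real (2 * num_edges E) = (\<Sum>u\<in>UNIV. real (degree E u))"
    by (simp add: edge_count[symmetric] degree_def)
  then show ?thesis by (simp add: dg_def)
qed

lemma tri_count: "card {(a,b,c). E a b \<and> E b c \<and> E a c} = 6 * num_triangles E"
proof -
  let ?A = "{(a,b,c). E a b \<and> E b c \<and> E a c}"
  let ?g = "\<lambda>(a::'n,b,c). {a,b,c}"
  have img: "?g ` ?A = triangles E" by (auto simp: triangles_def)
  have fib: "card {a\<in>?A. ?g a = T} = 6" if "T \<in> ?g ` ?A" for T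
  proof -
    obtain x y z where xyz: "E x y" "E y z" "E x z" "T = {x,y,z}" using \<open>T \<in> ?g ` ?A\<close> by auto
    have d: "x \<noteq> y" "y \<noteq> z" "x \<noteq> z" using xyz irrE by auto
    have "{a\<in>?A. ?g a = T} = {(x,y,z),(x,z,y),(y,x,z),(y,z,x),(z,x,y),(z,y,x)}"
    proof
      have s1: "E y x" "E z y" "E z x" using xyz symE by auto
      show "{(x,y,z),(x,z,y),(y,x,z),(y,z,x),(z,x,y),(z,y,x)} \<subseteq> {a\<in>?A. ?g a = T}"
        using xyz s1 by (simp add: insert_commute)
    next
      show "{a\<in>?A. ?g a = T} \<subseteq> {(x,y,z),(x,z,y),(y,x,z),(y,z,x),(z,x,y),(z,y,x)}"
      proof
        fix p assume p: "p \<in> {a\<in>?A. ?g a = T}"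
        obtain a b c where abc: "p = (a,b,c)" by (cases p) auto
        have e: "E a b" "E b c" "E a c" "{a,b,c} = T" using p abc by auto
        have dd: "a \<noteq> b" "b \<noteq> c" "a \<noteq> c" using e irrE by auto
        have m: "a = x \<or> a = y \<or> a = z" "b = x \<or> b = y \<or> b = z" "c = x \<or> c = y \<or> c = z"
          using e(4) xyz(4) by blast+
        show "p \<in> {(x,y,z),(x,z,y),(y,x,z),(y,z,x),(z,x,y),(z,y,x)}"
          unfolding abc using m dd by (elim disjE) simp_all
      qed
    qed
    then show ?thesis using d by simp
  qed
  have "card ?A = 6 * card (?g ` ?A)" by (rule card_fibers) (use fib in auto)
  then show ?thesis by (simp add: img num_triangles_def)
qed

lemma T3_tri: "(\<Sum>a\<in>UNIV. \<Sum>b\<in>UNIV. \<Sum>c\<in>UNIV. ee E a b * ee E b c * ee E a c) = 6 * real (num_triangles E)"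
proof -
  have "{(a,b,c). E a b \<and> E b c \<and> E a c} = (SIGMA a:UNIV. SIGMA b:UNIV. {c. E a b \<and> E b c \<and> E a c})" by auto
  then have "card {(a,b,c). E a b \<and> E b c \<and> E a c} = (\<Sum>a\<in>UNIV. \<Sum>b\<in>UNIV. card {c. E a b \<and> E b c \<and> E a c})"
    by (simp add: card_SigmaI)
  then have "real (6 * num_triangles E) = real (\<Sum>a\<in>UNIV. \<Sum>b\<in>UNIV. card {c. E a b \<and> E b c \<and> E a c})"
    by (simp add: tri_count[symmetric])
  then have "6 * real (num_triangles E) = (\<Sum>a\<in>UNIV. \<Sum>b\<in>UNIV. real (card {c. E a b \<and> E b c \<and> E a c}))"
    by (simp add: of_nat_sum)
  also have "\<dots> = (\<Sum>a\<in>UNIV. \<Sum>b\<in>UNIV. \<Sum>c\<in>UNIV. ee E a b * ee E b c * ee E a c)"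
    by (simp only: card_indicator_sum ind3 ee_def)
  finally show ?thesis by simp
qed

lemma dg_le: "dg E i \<le> real CARD('n) - 1"
proof -
  have "{u. E i u} \<subseteq> UNIV - {i}" using irrE by auto
  then have "card {u. E i u} \<le> card (UNIV - {i})" by (rule card_mono[rotated]) simp
  also have "\<dots> = CARD('n) - 1" by (simp add: card_Diff_singleton)
  finally have "degree E i \<le> CARD('n) - 1" by (simp add: degree_def)
  then have "real (degree E i) \<le> real (CARD('n) - 1)" by (rule of_nat_mono)
  moreover have "CARD('n) \<ge> 1" by (simp add: Suc_leI)
  then have "real (CARD('n) - 1) = real CARD('n) - 1" by (metis of_nat_1 of_nat_diff)
  ultimately show ?thesis by (simp add: dg_def)
qed

lemma dg_ge0: "dg E i \<ge> 0" by (simp add: dg_def)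

end



lemma alg:
  fixes n S1 S2 T3 Q N :: real
  assumes n0: "n > 0" and s1: "S1 > 0" and s1n: "S1 < n^2" and t3: "T3 < n * S1"
    and cs: "S1^2 \<le> n * S2" and Nd: "N = S1 - S2 / n" and N0: "N > 0" and Qd: "Q = S2 - T3"
  shows "n * (S1^2 - n * T3) / (S1 * (n^2 - S1)) \<le> Q / N"
    and "n * (S1^2 - n * T3) / (S1 * (n^2 - S1)) = Q / N \<longleftrightarrow> S1^2 = n * S2"
proof -
  define D where "D = S1 * (n^2 - S1)"
  have D0: "D > 0" using s1 s1n by (simp add: D_def)
  have Nn: "N * n = n * S1 - S2" using n0 by (simp add: Nd field_simps)
  have key: "Q * D - n * (S1^2 - n * T3) * N = (S1 * n - T3) * (n * S2 - S1^2)"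
  proof -
    have "n * (S1^2 - n * T3) * N = (S1^2 - n * T3) * (N * n)" by (simp add: algebra_simps)
    also have "\<dots> = (S1^2 - n * T3) * (n * S1 - S2)" by (simp add: Nn)
    finally show ?thesis by (simp add: Qd D_def algebra_simps power2_eq_square)
  qed
  have diff: "Q / N - n * (S1^2 - n * T3) / D = (S1 * n - T3) * (n * S2 - S1^2) / (N * D)"
    using N0 D0 key by (simp add: field_simps)
  have p1: "S1 * n - T3 > 0" using t3 by (simp add: mult.commute)
  have p2: "n * S2 - S1^2 \<ge> 0" using cs by simp
  have "(S1 * n - T3) * (n * S2 - S1^2) / (N * D) \<ge> 0"
    using p1 p2 N0 D0 by simp
  then show "n * (S1^2 - n * T3) / (S1 * (n^2 - S1)) \<le> Q / N"
    using diff unfolding D_def by simp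
  have "(S1 * n - T3) * (n * S2 - S1^2) / (N * D) = 0 \<longleftrightarrow> S1^2 = n * S2"
    using p1 N0 D0 by auto
  then show "n * (S1^2 - n * T3) / (S1 * (n^2 - S1)) = Q / N \<longleftrightarrow> S1^2 = n * S2"
    using diff unfolding D_def by (auto simp: algebra_simps)
qed




context
  fixes E :: "'n::finite \<Rightarrow> 'n \<Rightarrow> bool"
  assumes sg: "simple_graph E"
begin

lemma ex_edge: assumes "num_edges E \<ge> 1" shows "\<exists>u v. E u v"
proof -
  have "edges E \<noteq> {}" using assms by (auto simp: num_edges_def)
  then show ?thesis by (auto simp: edges_def)
qed

lemma dg_pos: assumes "E u v" shows "dg E u \<ge> 1"
proof -
  have "v \<in> {w. E u w}" using assms by simp
  then have "card {w. E u w} > 0" by (auto simp: card_gt_0_iff)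
  then show ?thesis by (simp add: dg_def degree_def)
qed

lemma N_lower: "(\<Sum>i\<in>UNIV. dg E i) / real CARD('n) \<le> (\<Sum>i\<in>UNIV. dg E i) - (\<Sum>i\<in>UNIV. (dg E i)^2) / real CARD('n)"
proof -
  have n0: "real CARD('n) > 0" by simp
  have t: "dg E i / real CARD('n) \<le> dg E i - (dg E i)^2 / real CARD('n)" for i
  proof -
    have "dg E i * (real CARD('n) - 1 - dg E i) \<ge> 0"
      using dg_le[OF sg, of i] dg_ge0[OF sg, of i] by simp
    then have "dg E i \<le> dg E i * real CARD('n) - (dg E i)^2"
      by (simp add: algebra_simps power2_eq_square)
    then show ?thesis using n0 by (simp add: field_simps)
  qed
  have "(\<Sum>i\<in>UNIV. dg E i) / real CARD('n) = (\<Sum>i\<in>UNIV. dg E i / real CARD('n))"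
    by (simp add: sum_divide_distrib)
  also have "\<dots> \<le> (\<Sum>i\<in>UNIV. dg E i - (dg E i)^2 / real CARD('n))"
    by (rule sum_mono) (rule t)
  also have "\<dots> = (\<Sum>i\<in>UNIV. dg E i) - (\<Sum>i\<in>UNIV. (dg E i)^2) / real CARD('n)"
    by (simp add: sum_subtractf sum_divide_distrib)
  finally show ?thesis .
qed

lemma CS_var: "(\<Sum>i\<in>UNIV. (dg E i - (\<Sum>j\<in>UNIV. dg E j) / real CARD('n))^2)
   = (\<Sum>i\<in>UNIV. (dg E i)^2) - (\<Sum>i\<in>UNIV. dg E i)^2 / real CARD('n)"
proof -
  define a where "a = (\<Sum>j\<in>UNIV. dg E j) / real CARD('n)"
  have n0: "real CARD('n) > 0" by simp
  have "(\<Sum>i\<in>UNIV. (dg E i - a)^2) = (\<Sum>i\<in>UNIV. (dg E i)^2 - 2 * a * dg E i + a^2)"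
    by (simp add: power2_eq_square algebra_simps)
  also have "\<dots> = (\<Sum>i\<in>UNIV. (dg E i)^2) - 2 * a * (\<Sum>i\<in>UNIV. dg E i) + real CARD('n) * a^2"
    by (simp add: sum.distrib sum_subtractf sum_distrib_left)
  also have "\<dots> = (\<Sum>i\<in>UNIV. (dg E i)^2) - (\<Sum>i\<in>UNIV. dg E i)^2 / real CARD('n)"
    using n0 by (simp add: a_def field_simps power2_eq_square)
  finally show ?thesis by (simp add: a_def)
qed

lemma CS: "(\<Sum>i\<in>UNIV. dg E i)^2 \<le> real CARD('n) * (\<Sum>i\<in>UNIV. (dg E i)^2)"
proof -
  have "0 \<le> (\<Sum>i\<in>UNIV. (dg E i - (\<Sum>j\<in>UNIV. dg E j) / real CARD('n))^2)"
    by (rule sum_nonneg) simp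
  then have "(\<Sum>i\<in>UNIV. dg E i)^2 / real CARD('n) \<le> (\<Sum>i\<in>UNIV. (dg E i)^2)"
    unfolding CS_var by simp
  then show ?thesis by (simp add: field_simps)
qed

lemma CS_eq: assumes "(\<Sum>i\<in>UNIV. dg E i)^2 = real CARD('n) * (\<Sum>i\<in>UNIV. (dg E i)^2)"
  shows "dg E v = (\<Sum>j\<in>UNIV. dg E j) / real CARD('n)"
proof -
  define a where "a = (\<Sum>j\<in>UNIV. dg E j) / real CARD('n)"
  have n0: "real CARD('n) \<noteq> 0" by simp
  have "(\<Sum>i\<in>UNIV. dg E i)^2 / real CARD('n) = (\<Sum>i\<in>UNIV. (dg E i)^2)"
    unfolding assms using n0 by (rule nonzero_mult_div_cancel_left)
  then have "(\<Sum>i\<in>UNIV. (dg E i - a)^2) = 0"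
    unfolding a_def CS_var by simp
  moreover have "\<And>i. i \<in> UNIV \<Longrightarrow> 0 \<le> (dg E i - a)^2" by simp
  ultimately have "\<forall>i\<in>UNIV. (dg E i - a)^2 = 0"
    using sum_nonneg_eq_0_iff[of UNIV "\<lambda>i. (dg E i - a)^2"] by simp
  then have "(dg E v - a)^2 = 0" by simp
  then show ?thesis unfolding a_def by simp
qed

lemma T3_le_S2: "(\<Sum>w\<in>UNIV. \<Sum>i\<in>UNIV. \<Sum>j\<in>UNIV. ee E w i * ee E i j * ee E w j) \<le> (\<Sum>i\<in>UNIV. (dg E i)^2)"
proof -
  have "(\<Sum>w\<in>UNIV. \<Sum>i\<in>UNIV. \<Sum>j\<in>UNIV. ee E w i * ee E i j * ee E w j)
      \<le> (\<Sum>w\<in>UNIV. \<Sum>i\<in>UNIV. \<Sum>j\<in>UNIV. ee E w i * ee E i j)"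
    by (intro sum_mono) (simp add: ee_def)
  also have "\<dots> = (\<Sum>w\<in>UNIV. \<Sum>i\<in>UNIV. ee E w i * dg E i)"
    by (simp add: dg_sum sum_distrib_left)
  also have "\<dots> = (\<Sum>i\<in>UNIV. \<Sum>w\<in>UNIV. ee E w i * dg E i)"
    by (rule sum.swap)
  also have "\<dots> = (\<Sum>i\<in>UNIV. (dg E i)^2)"
    by (simp add: sum_distrib_right[symmetric] dg_sum'[OF sg, symmetric] power2_eq_square)
  finally show ?thesis .
qed

lemma S2_le: "(\<Sum>i\<in>UNIV. (dg E i)^2) \<le> (real CARD('n) - 1) * (\<Sum>i\<in>UNIV. dg E i)"
proof -
  have "(\<Sum>i\<in>UNIV. (dg E i)^2) \<le> (\<Sum>i\<in>UNIV. (real CARD('n) - 1) * dg E i)"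
  proof (rule sum_mono)
    fix i
    show "(dg E i)^2 \<le> (real CARD('n) - 1) * dg E i"
      using dg_le[OF sg, of i] dg_ge0[OF sg, of i] by (simp add: power2_eq_square mult_right_mono)
  qed
  then show ?thesis by (simp add: sum_distrib_left)
qed

lemma S1_le: "(\<Sum>i\<in>UNIV. dg E i) \<le> real CARD('n) * (real CARD('n) - 1)"
proof -
  have "(\<Sum>i\<in>UNIV. dg E i) \<le> (\<Sum>i\<in>(UNIV::'n set). real CARD('n) - 1)"
    by (rule sum_mono) (rule dg_le[OF sg])
  then show ?thesis by simp
qed

lemma lap_le_n: "x \<bullet> (laplacian E *v x) \<le> real CARD('n) * (x \<bullet> x)"
proof -
  define A where "A = (\<Sum>i\<in>UNIV. \<Sum>j\<in>UNIV. ee E i j * (x$i - x$j)^2)"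
  define B where "B = (\<Sum>i\<in>UNIV. \<Sum>j\<in>(UNIV::'n set). (x$i - x$j)^2)"
  have pt: "ee E i j * (x$i - x$j)^2 = ee E i j * (x$i*x$i) + ee E i j * (x$j*x$j) - 2 * (ee E i j * x$i * x$j)" for i j
    by (simp add: power2_eq_square algebra_simps)
  have pt2: "(x$i - x$j)^2 = x$i*x$i + x$j*x$j - 2 * (x$i * x$j)" for i j
    by (simp add: power2_eq_square algebra_simps)
  have A2: "A = 2 * (x \<bullet> (laplacian E *v x))"
  proof -
    have "A = (\<Sum>i\<in>UNIV. \<Sum>j\<in>UNIV. ee E i j * (x$i * x$i)) + (\<Sum>i\<in>UNIV. \<Sum>j\<in>UNIV. ee E i j * (x$j * x$j))
       - (\<Sum>i\<in>UNIV. \<Sum>j\<in>UNIV. 2 * (ee E i j * x$i * x$j))"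
      by (simp only: A_def pt sum.distrib sum_subtractf)
    also have "(\<Sum>i\<in>UNIV. \<Sum>j\<in>UNIV. 2 * (ee E i j * x$i * x$j)) = 2 * (\<Sum>i\<in>UNIV. \<Sum>j\<in>UNIV. ee E i j * x$i * x$j)"
      by (simp add: sum_distrib_left)
    also have "(\<Sum>i\<in>UNIV. \<Sum>j\<in>UNIV. ee E i j * (x$i * x$i)) = (\<Sum>i\<in>UNIV. dg E i * x$i * x$i)"
      by (simp add: dg_sum sum_distrib_right mult.assoc)
    also have "(\<Sum>i\<in>UNIV. \<Sum>j\<in>UNIV. ee E i j * (x$j * x$j)) = (\<Sum>j\<in>UNIV. \<Sum>i\<in>UNIV. ee E i j * (x$j * x$j))"
      by (rule sum.swap)
    also have "\<dots> = (\<Sum>i\<in>UNIV. dg E i * x$i * x$i)"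
      by (simp add: dg_sum'[OF sg] sum_distrib_right mult.assoc)
    finally show ?thesis by (simp add: quad_form[OF sg])
  qed
  have B2: "B = 2 * real CARD('n) * (x \<bullet> x) - 2 * (\<Sum>i\<in>UNIV. x$i)^2"
  proof -
    have "B = (\<Sum>i\<in>UNIV. \<Sum>j\<in>(UNIV::'n set). x$i * x$i) + (\<Sum>i\<in>(UNIV::'n set). \<Sum>j\<in>UNIV. x$j * x$j)
       - (\<Sum>i\<in>UNIV. \<Sum>j\<in>UNIV. 2 * (x$i * x$j))"
      by (simp only: B_def pt2 sum.distrib sum_subtractf)
    also have "(\<Sum>i\<in>UNIV. \<Sum>j\<in>UNIV. 2 * (x$i * x$j)) = 2 * (\<Sum>i\<in>UNIV. x$i)^2"
    proof -
      have "(\<Sum>i\<in>UNIV. x$i)^2 = (\<Sum>i\<in>UNIV. \<Sum>j\<in>UNIV. x$i * x$j)"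
        unfolding power2_eq_square by (rule sum_product)
      then show ?thesis by (simp add: sum_distrib_left)
    qed
    also have "(\<Sum>i\<in>UNIV. \<Sum>j\<in>(UNIV::'n set). x$i * x$i) = real CARD('n) * (x \<bullet> x)"
      by (simp add: inner_vec_def sum_distrib_left)
    also have "(\<Sum>i\<in>(UNIV::'n set). \<Sum>j\<in>UNIV. x$j * x$j) = real CARD('n) * (x \<bullet> x)"
      by (simp add: inner_vec_def)
    finally show ?thesis by simp
  qed
  have "A \<le> B" unfolding A_def B_def
    by (intro sum_mono) (simp add: ee_def)
  then have h: "x \<bullet> (laplacian E *v x) \<le> real CARD('n) * (x \<bullet> x) - (\<Sum>i\<in>UNIV. x$i)^2"
    using A2 B2 by simp
  have "(\<Sum>i\<in>UNIV. x$i)^2 \<ge> 0" by simp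
  then show ?thesis using h by linarith
qed

end



context
  fixes E :: "'n::finite \<Rightarrow> 'n \<Rightarrow> bool"
  assumes sg: "simple_graph E"
begin

lemma eig_struct:
  assumes eig: "\<And>w. laplacian E *v xw E w = lam *\<^sub>R xw E w" and e0: "E u0 v0"
  shows "lam = real CARD('n)" and "\<And>w v j. \<not> E w v \<Longrightarrow> E w j \<Longrightarrow> E v j"
proof -
  have n0: "real CARD('n) > 0" by simp
  have comp: "dg E i * ee E w i - (\<Sum>j\<in>UNIV. ee E i j * ee E w j) = lam * (ee E w i - dg E w / real CARD('n))" for w i
  proof -
    have a: "(laplacian E *v xw E w) $ i = (lam *\<^sub>R xw E w) $ i" using eig by simp
    have b: "(lam *\<^sub>R xw E w) $ i = lam * (ee E w i - dg E w / real CARD('n))" by (simp add: xw_def)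
    show ?thesis using a b Lxw[OF sg, of w i] by linarith
  qed
  have "dg E u0 * ee E u0 u0 - (\<Sum>j\<in>UNIV. ee E u0 j * ee E u0 j) = - dg E u0"
    by (simp add: ee_irr[OF sg] ee_sq dg_sum[of E u0])
  then have "- dg E u0 = lam * (0 - dg E u0 / real CARD('n))"
    using comp[of u0 u0] by (simp add: ee_irr[OF sg])
  then have "dg E u0 * real CARD('n) = lam * dg E u0" using n0 by (simp add: field_simps)
  moreover have "dg E u0 \<ge> 1" by (rule dg_pos[OF sg e0])
  ultimately show lamn: "lam = real CARD('n)" by simp
  fix w v j assume nwv: "\<not> E w v" and ewj: "E w j"
  have "dg E v * ee E w v - (\<Sum>j\<in>UNIV. ee E v j * ee E w j) = lam * (ee E w v - dg E w / real CARD('n))"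
    by (rule comp)
  then have "(\<Sum>j\<in>UNIV. ee E v j * ee E w j) = dg E w"
    using nwv n0 lamn by (simp add: ee_def)
  then have "(\<Sum>j\<in>UNIV. ee E w j - ee E v j * ee E w j) = 0"
    by (simp add: sum_subtractf dg_sum[of E w])
  moreover have "\<And>j. j \<in> UNIV \<Longrightarrow> 0 \<le> ee E w j - ee E v j * ee E w j"
    by (simp add: ee_def)
  ultimately have "\<forall>j\<in>UNIV. ee E w j - ee E v j * ee E w j = 0"
    using sum_nonneg_eq_0_iff[of UNIV "\<lambda>j. ee E w j - ee E v j * ee E w j"] by simp
  then have "ee E w j - ee E v j * ee E w j = 0" by simp
  then show "E v j" using ewj by (simp add: ee_def split: if_splits)
qed

lemma mk_multi:
  assumes nonadj: "\<And>w v j. \<not> E w v \<Longrightarrow> E w j \<Longrightarrow> E v j"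
    and reg: "\<And>v. degree E v = d" and e0: "E u0 v0"
  shows "regular_complete_multipartite E"
proof -
  define cls where "cls v = {u. \<not> E v u}" for v
  define C where "C = range cls"
  have finC: "finite C" unfolding C_def by simp
  obtain h where h: "bij_betw h C {0..<card C}" using ex_bij_betw_finite_nat[OF finC] by blast
  define f where "f v = h (cls v)" for v
  have clseq: "cls u = cls v \<longleftrightarrow> \<not> E u v" for u v
  proof
    assume "cls u = cls v"
    moreover have "u \<in> cls u" using irrE[OF sg] by (simp add: cls_def)
    ultimately have "\<not> E v u" by (simp add: cls_def)
    then show "\<not> E u v" using symE[OF sg] by blast
  next
    assume n: "\<not> E u v"
    then have n': "\<not> E v u" using symE[OF sg] by blast
    have "E u j \<longleftrightarrow> E v j" for j using nonadj[OF n] nonadj[OF n'] by blast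
    then show "cls u = cls v" by (simp add: cls_def)
  qed
  have inj: "inj_on h C" using h by (rule bij_betw_imp_inj_on)
  have feq: "f u = f v \<longleftrightarrow> \<not> E u v" for u v
  proof -
    have "f u = f v \<longleftrightarrow> cls u = cls v"
      unfolding f_def using inj by (auto simp: C_def inj_on_def)
    then show ?thesis using clseq by simp
  qed
  have rng: "range f = {0..<card C}"
  proof -
    have "range f = h ` C" unfolding f_def C_def by auto
    then show ?thesis using h by (simp add: bij_betw_def)
  qed
  have k2: "card C \<ge> 2"
  proof -
    have "cls u0 \<noteq> cls v0" using clseq e0 by simp
    moreover have "{cls u0, cls v0} \<subseteq> C" by (simp add: C_def)
    ultimately have "card {cls u0, cls v0} \<le> card C" using finC by (intro card_mono) auto
    then show ?thesis using \<open>cls u0 \<noteq> cls v0\<close> by simp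
  qed
  have cardw: "card {v. f v = f w} = CARD('n) - d" for w
  proof -
    have "{v. f v = f w} = UNIV - {u. E w u}"
      using feq symE[OF sg] by auto
    then have "card {v. f v = f w} = CARD('n) - card {u. E w u}"
      by (simp add: card_Diff_subset)
    then show ?thesis using reg[of w] by (simp add: degree_def)
  qed
  have eqc: "card {v. f v = i} = card {v. f v = j}" if "i < card C" "j < card C" for i j
  proof -
    have "i \<in> range f" "j \<in> range f" using that rng by auto
    then obtain wi wj where "i = f wi" "j = f wj" by blast
    then show ?thesis using cardw by simp
  qed
  show ?thesis unfolding regular_complete_multipartite_def
  proof (intro exI conjI)
    show "2 \<le> card C" by (rule k2)
    show "range f = {0..<card C}" by (rule rng)
    show "\<forall>i<card C. \<forall>j<card C. card {v. f v = i} = card {v. f v = j}" using eqc by blast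
    show "\<forall>u v. E u v = (f u \<noteq> f v)" using feq by blast
  qed
qed

lemma card_compl_real: "real (card (UNIV - A)) = real CARD('n) - real (card (A::'n set))"
proof -
  have "card A \<le> CARD('n)" by (rule card_mono) auto
  moreover have "card (UNIV - A) = CARD('n) - card A" by (simp add: card_Diff_subset)
  ultimately show ?thesis by (simp add: of_nat_diff)
qed

lemma mp_facts:
  assumes "regular_complete_multipartite E"
  shows "\<exists>c. (\<forall>v. dg E v = real CARD('n) - c) \<and> (\<forall>w. laplacian E *v xw E w = real CARD('n) *\<^sub>R xw E w)"
proof -
  obtain k and f :: "'n \<Rightarrow> nat" where k2: "k \<ge> 2" and rng: "range f = {0..<k}"
    and eqc: "\<forall>i<k. \<forall>j<k. card {v. f v = i} = card {v. f v = j}"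
    and Ef: "\<forall>u v. E u v \<longleftrightarrow> f u \<noteq> f v"
    using assms unfolding regular_complete_multipartite_def by (elim exE conjE) (rule that)
  define cc where "cc = card {v. f v = 0}"
  have fk: "f v < k" for v using rng by auto
  have cv: "card {u. f u = f v} = cc" for v
    unfolding cc_def by (rule eqc[rule_format]) (use fk[of v] k2 in auto)
  have dgv: "dg E v = real CARD('n) - real cc" for v
  proof -
    have "{u. E v u} = UNIV - {u. f u = f v}" using Ef by auto
    then show ?thesis using card_compl_real[of "{u. f u = f v}"] cv[of v]
      by (simp add: dg_def degree_def)
  qed
  have L: "laplacian E *v xw E w = real CARD('n) *\<^sub>R xw E w" for w
  proof (rule vec_eq_iff[THEN iffD2], rule allI)
    fix i
    have s: "(\<Sum>j\<in>UNIV. ee E i j * ee E w j) = real (card {j. f i \<noteq> f j \<and> f w \<noteq> f j})"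
      by (simp add: card_indicator_sum ee_def Ef if_distrib[of "\<lambda>a. a * _"] cong: if_cong) (rule sum.cong, auto)
    have cardc: "real (card {j. f i \<noteq> f j \<and> f w \<noteq> f j}) =
        (if f i = f w then real CARD('n) - real cc else real CARD('n) - 2 * real cc)"
    proof (cases "f i = f w")
      case True
      then have "{j. f i \<noteq> f j \<and> f w \<noteq> f j} = UNIV - {j. f j = f w}" by auto
      then show ?thesis using True card_compl_real[of "{j. f j = f w}"] cv[of w] by simp
    next
      case False
      then have "{j. f i \<noteq> f j \<and> f w \<noteq> f j} = UNIV - ({j. f j = f i} \<union> {j. f j = f w})" by auto
      moreover have "card ({j. f j = f i} \<union> {j. f j = f w}) = cc + cc"
        using False cv[of i] cv[of w] by (subst card_Un_disjoint) auto
      ultimately show ?thesis using False card_compl_real[of "{j. f j = f i} \<union> {j. f j = f w}"] by simp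
    qed
    have n0: "real CARD('n) > 0" by simp
    show "(laplacian E *v xw E w) $ i = (real CARD('n) *\<^sub>R xw E w) $ i"
      unfolding Lxw[OF sg] s cardc using n0
      by (simp add: xw_def dgv ee_def Ef field_simps eq_commute[of "f i" "f w"])
  qed
  show ?thesis using dgv L by blast
qed

end



theorem theorem2:
  fixes E :: "'n::finite \<Rightarrow> 'n \<Rightarrow> bool"
  assumes "simple_graph E"
    and "num_edges E \<ge> 1"
  shows "lap_max_eig E \<ge>
           (2 * real (num_edges E)^2 - 3 * real CARD('n) * real (num_triangles E))
           / (real (num_edges E) * (real CARD('n)^2 - 2 * real (num_edges E))) * real CARD('n)
         \<and> (lap_max_eig E =
           (2 * real (num_edges E)^2 - 3 * real CARD('n) * real (num_triangles E))
           / (real (num_edges E) * (real CARD('n)^2 - 2 * real (num_edges E))) * real CARD('n)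
            \<longleftrightarrow> regular_complete_multipartite E)"
proof -
  note sg = assms(1)
  define n where "n = real CARD('n)"
  define m where "m = real (num_edges E)"
  define t where "t = real (num_triangles E)"
  define S1 where "S1 = (\<Sum>i\<in>UNIV. dg E i)"
  define S2 where "S2 = (\<Sum>i\<in>UNIV. (dg E i)^2)"
  define T3 where "T3 = (\<Sum>w\<in>UNIV. \<Sum>i\<in>UNIV. \<Sum>j\<in>UNIV. ee E w i * ee E i j * ee E w j)"
  define Q where "Q = (\<Sum>w\<in>UNIV. xw E w \<bullet> (laplacian E *v xw E w))"
  define N where "N = (\<Sum>w\<in>UNIV. xw E w \<bullet> xw E w)"
  define lam where "lam = lap_max_eig E"
  define R where "R = n * (S1^2 - n * T3) / (S1 * (n^2 - S1))"
  have lsym: "\<And>i j. laplacian E $ i $ j = laplacian E $ j $ i" by (rule lap_sym[OF sg])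
  have ev: "eigenvalue (laplacian E) lam" and ray: "\<And>x. x \<bullet> (laplacian E *v x) \<le> lam * (x \<bullet> x)"
    using sym_max_eig_Max[of "laplacian E", OF lsym] unfolding lam_def lap_max_eig_def by auto
  have n0: "n > 0" by (simp add: n_def)
  have S1m: "S1 = 2 * m" unfolding S1_def m_def by (rule S1_edges[OF sg])
  have T3t: "T3 = 6 * t" unfolding T3_def t_def by (rule T3_tri[OF sg])
  have Qd: "Q = S2 - T3" unfolding Q_def S2_def T3_def by (rule Qsum[OF sg])
  have Nd: "N = S1 - S2 / n" unfolding N_def S1_def S2_def n_def by (rule Nsum[OF sg])
  have m1: "m \<ge> 1" using assms(2) by (simp add: m_def)
  have S1p: "S1 > 0" using m1 S1m by simp
  have Np: "N > 0"
  proof -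
    have "S1 / n \<le> N" using N_lower[OF sg] unfolding Nd S1_def S2_def n_def .
    moreover have "S1 / n > 0" using S1p n0 by simp
    ultimately show ?thesis by linarith
  qed
  have S1lt: "S1 < n^2"
  proof -
    have "S1 \<le> n * (n - 1)" using S1_le[OF sg] unfolding S1_def n_def .
    then show ?thesis using n0 by (simp add: algebra_simps power2_eq_square)
  qed
  have T3lt: "T3 < n * S1"
  proof -
    have "T3 \<le> S2" using T3_le_S2[OF sg] unfolding T3_def S2_def .
    also have "S2 \<le> (n - 1) * S1" using S2_le[OF sg] unfolding S2_def S1_def n_def .
    also have "\<dots> < n * S1" using S1p by (simp add: algebra_simps)
    finally show ?thesis .
  qed
  have cs: "S1^2 \<le> n * S2" using CS[OF sg] unfolding S1_def S2_def n_def .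
  have RQ: "R \<le> Q / N" and RQeq: "R = Q / N \<longleftrightarrow> S1^2 = n * S2"
    using alg[OF n0 S1p S1lt T3lt cs Nd Np Qd] unfolding R_def by auto
  have Rst: "(2 * m^2 - 3 * n * t) / (m * (n^2 - 2 * m)) * n = R"
  proof -
    have d: "n^2 - 2 * m > 0" using S1lt S1m by simp
    have mp: "m > 0" using m1 by simp
    show ?thesis unfolding R_def S1m T3t using d mp
      by (simp add: field_simps power2_eq_square)
  qed
  have QN: "Q \<le> lam * N"
  proof -
    have "Q \<le> (\<Sum>w\<in>UNIV. lam * (xw E w \<bullet> xw E w))" unfolding Q_def
      by (rule sum_mono) (rule ray)
    then show ?thesis by (simp add: N_def sum_distrib_left)
  qed
  have QNl: "Q / N \<le> lam" using QN Np by (simp add: divide_le_eq mult.commute)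
  have part1: "R \<le> lam" using RQ QNl by linarith
  have part2: "lam = R \<longleftrightarrow> regular_complete_multipartite E"
  proof
    assume lR: "lam = R"
    have QNe: "Q / N = R" using RQ QNl lR by linarith
    then have reg0: "S1^2 = n * S2" using RQeq by simp
    have regv: "dg E v = S1 / n" for v
      using CS_eq[OF sg] reg0 unfolding S1_def S2_def n_def by blast
    obtain u0 v0 where e0: "E u0 v0" using ex_edge[OF sg assms(2)] by blast
    have degeq: "degree E v = degree E u0" for v
    proof -
      have "dg E v = dg E u0" using regv[of v] regv[of u0] by simp
      then show ?thesis by (simp add: dg_def)
    qed
    have Qe: "Q = lam * N" using QNe lR Np by (simp add: field_simps)
    have "(\<Sum>w\<in>UNIV. lam * (xw E w \<bullet> xw E w) - xw E w \<bullet> (laplacian E *v xw E w)) = 0"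
      using Qe by (simp add: sum_subtractf sum_distrib_left[symmetric] Q_def N_def)
    moreover have "\<And>w. w \<in> UNIV \<Longrightarrow> 0 \<le> lam * (xw E w \<bullet> xw E w) - xw E w \<bullet> (laplacian E *v xw E w)"
      using ray by (simp add: algebra_simps)
    ultimately have "\<forall>w\<in>UNIV. lam * (xw E w \<bullet> xw E w) - xw E w \<bullet> (laplacian E *v xw E w) = 0"
      using sum_nonneg_eq_0_iff[of UNIV "\<lambda>w. lam * (xw E w \<bullet> xw E w) - xw E w \<bullet> (laplacian E *v xw E w)"]
      by simp
    then have "\<And>w. xw E w \<bullet> (laplacian E *v xw E w) = lam * (xw E w \<bullet> xw E w)" by simp
    then have eig: "\<And>w. laplacian E *v xw E w = lam *\<^sub>R xw E w"
      by (rule psd_zero[OF lsym ray])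
    have na: "\<And>w v j. \<not> E w v \<Longrightarrow> E w j \<Longrightarrow> E v j" by (rule eig_struct(2)[OF sg eig e0])
    show "regular_complete_multipartite E" by (rule mk_multi[OF sg na degeq e0])
  next
    assume mp: "regular_complete_multipartite E"
    obtain c where dgc: "\<And>v. dg E v = n - c" and Lx: "\<And>w. laplacian E *v xw E w = n *\<^sub>R xw E w"
      using mp_facts[OF sg mp] unfolding n_def by blast
    have "Q = n * N" unfolding Q_def N_def by (simp add: Lx sum_distrib_left)
    then have QNn: "Q / N = n" using Np by simp
    have "S1 = n * (n - c)" unfolding S1_def using dgc by (simp add: n_def)
    moreover have "S2 = n * (n - c)^2" unfolding S2_def using dgc by (simp add: n_def)
    ultimately have "S1^2 = n * S2" by (simp add: power2_eq_square)
    then have Rn: "R = n" using RQeq QNn by simp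
    obtain z where z: "z \<noteq> 0" "laplacian E *v z = lam *\<^sub>R z" using ev unfolding eigenvalue_def by blast
    have "lam * (z \<bullet> z) = z \<bullet> (laplacian E *v z)" using z(2) by simp
    also have "\<dots> \<le> n * (z \<bullet> z)" unfolding n_def by (rule lap_le_n[OF sg])
    finally have "lam \<le> n" using z(1) by simp
    then show "lam = R" using part1 Rn by simp
  qed
  show ?thesis
    using part1 part2 Rst unfolding lam_def n_def m_def t_def by simp
qed



end
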